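(* Let $n\ge1$, $\boldsymbol z\in\{0,1\}^n$ and $\boldsymbol y,\boldsymbol y'\in\overline{\mathbb R}^n$ satisfy $y_i\le y_i'$ whenever $z_i=1$ and $y_i\ge y_i'$ whenever $z_i=0$. Then $t_{\mathrm R,\phi}(\boldsymbol z,\boldsymbol y)\le t_{\mathrm R,\phi}(\boldsymbol z,\boldsymbol y')$, where $t_{\mathrm R,\phi}$ is either the rank-sum statistic or the Mann–Whitney-type statistic defined below.
   Context: $\overline{\mathbb R}=\mathbb R\cup\{\pm\infty\}$. For $1\le i,j\le n$ and $y,y'\in\overline{\mathbb R}$, $\psi_{i,j}(y,y')=\mathbf 1\{y>y'\}+\mathbf 1\{y=y'\}\mathbf 1\{i\ge j\}$; for $\boldsymbol y\in\overline{\mathbb R}^n$, $\mathrm{rank}_i(\boldsymbol y)=\sum_{j=1}^n\psi_{i,j}(y_i,y_j)$. $\phi$ is a fixed nondecreasing real function on the nonnegative integers. Rank-sum statistic: $t_{\mathrm R,\phi}(\boldsymbol z,\boldsymbol y)=\sum_{i=1}^nz_i\phi(\mathrm{rank}_i(\boldsymbol y))$. Mann–Whitney-type statistic: $t_{\mathrm R,\phi}(\boldsymbol z,\boldsymbol y)=\sum_{i=1}^nz_i\phi\big(\sum_{j=1}^n(1-z_j)\psi_{i,j}(y_i,y_j)\big)$. *)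

theory Defs
  imports "HOL-Library.Extended_Real"
begin

definition psi :: "nat \<Rightarrow> nat \<Rightarrow> ereal \<Rightarrow> ereal \<Rightarrow> nat" where
  "psi i j a b = (if a > b then 1 else 0) + (if a = b \<and> i \<ge> j then 1 else 0)"

definition rank :: "nat \<Rightarrow> nat \<Rightarrow> (nat \<Rightarrow> ereal) \<Rightarrow> nat" where
  "rank n i y = (\<Sum>j=1..n. psi i j (y i) (y j))"

text \<open>Rank-sum statistic; z takes values in {0,1} (natural numbers).\<close>
definition t_rank :: "(nat \<Rightarrow> real) \<Rightarrow> nat \<Rightarrow> (nat \<Rightarrow> nat) \<Rightarrow> (nat \<Rightarrow> ereal) \<Rightarrow> real" where
  "t_rank \<phi> n z y = (\<Sum>i=1..n. real (z i) * \<phi> (rank n i y))"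

definition t_mw :: "(nat \<Rightarrow> real) \<Rightarrow> nat \<Rightarrow> (nat \<Rightarrow> nat) \<Rightarrow> (nat \<Rightarrow> ereal) \<Rightarrow> real" where
  "t_mw \<phi> n z y = (\<Sum>i=1..n. real (z i) * \<phi> (\<Sum>j=1..n. (1 - z j) * psi i j (y i) (y j)))"

end

theory Submission
  imports Defs
begin

definition Pk :: "(nat \<Rightarrow> ereal) \<Rightarrow> nat \<Rightarrow> nat \<Rightarrow> bool" where
  "Pk y j i \<longleftrightarrow> y j < y i \<or> (y j = y i \<and> j \<le> i)"

lemma psi_eq: "psi i j (y i) (y j) = (if Pk y j i then 1 else 0)"
  by (auto simp: psi_def Pk_def)

lemma card_sum_if: "finite A \<Longrightarrow> (\<Sum>j\<in>A. (if Q j then 1 else 0 :: nat)) = card {j\<in>A. Q j}"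
  by (simp add: sum.If_cases Int_def)

lemma rank_card: "rank n i y = card {j\<in>{1..n}. Pk y j i}"
  unfolding rank_def psi_eq by (simp add: card_sum_if)

lemma Pk_trans: "Pk y a b \<Longrightarrow> Pk y b c \<Longrightarrow> Pk y a c"
  unfolding Pk_def by (metis order.strict_trans order.strict_trans1 order.strict_trans2 order_trans)

lemma Pk_total: "Pk y a b \<or> Pk y b a"
  unfolding Pk_def by (metis linorder_cases nle_le)

lemma Pk_antisym: "Pk y a b \<Longrightarrow> Pk y b a \<Longrightarrow> a = b"
  unfolding Pk_def by auto

lemma rank_mono: "Pk y a b \<Longrightarrow> rank n a y \<le> rank n b y"
  unfolding rank_card by (rule card_mono) (auto intro: Pk_trans)

lemma rank_strict: "Pk y a b \<Longrightarrow> a \<noteq> b \<Longrightarrow> b \<in> {1..n} \<Longrightarrow> rank n a y < rank n b y"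
  unfolding rank_card
proof (rule psubset_card_mono)
  assume "Pk y a b" "a \<noteq> b" "b \<in> {1..n}"
  have "b \<in> {j \<in> {1..n}. Pk y j b}" using \<open>b \<in> {1..n}\<close> by (simp add: Pk_def)
  moreover have "b \<notin> {j \<in> {1..n}. Pk y j a}" using Pk_antisym \<open>Pk y a b\<close> \<open>a \<noteq> b\<close> by blast
  ultimately show "{j \<in> {1..n}. Pk y j a} < {j \<in> {1..n}. Pk y j b}"
    using \<open>Pk y a b\<close> by (auto intro: Pk_trans)
qed simp

lemma rank_range: "i \<in> {1..n} \<Longrightarrow> rank n i y \<in> {1..n}"
proof -
  assume i: "i \<in> {1..n}"
  have "i \<in> {j\<in>{1..n}. Pk y j i}" using i by (simp add: Pk_def)
  then have "card {i} \<le> card {j\<in>{1..n}. Pk y j i}"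
    by (intro card_mono) auto
  then have "card {j\<in>{1..n}. Pk y j i} \<ge> 1" by simp
  moreover have "card {j\<in>{1..n}. Pk y j i} \<le> card {1..n}"
    by (intro card_mono) auto
  ultimately show ?thesis by (simp add: rank_card)
qed

lemma rank_inj: "inj_on (\<lambda>i. rank n i y) {1..n}"
proof (rule inj_onI)
  fix a b assume a: "a \<in> {1..n}" and b: "b \<in> {1..n}" and e: "rank n a y = rank n b y"
  show "a = b"
  proof (rule ccontr)
    assume "a \<noteq> b"
    then show False using Pk_total[of y a b] rank_strict[of y a b n] rank_strict[of y b a n] a b e
      by auto
  qed
qed

lemma rank_img: "(\<lambda>i. rank n i y) ` {1..n} = {1..n}"
proof (rule endo_inj_surj)
  show "(\<lambda>i. rank n i y) ` {1..n} \<subseteq> {1..n}"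
  proof
    fix x assume "x \<in> (\<lambda>i. rank n i y) ` {1..n}"
    then obtain i where "i \<in> {1..n}" "x = rank n i y" by blast
    then show "x \<in> {1..n}" using rank_range by blast
  qed
  show "inj_on (\<lambda>i. rank n i y) {1..n}" by (rule rank_inj)
qed simp

lemma card_low: "card {i\<in>{1..n}. rank n i y < r} = card {k\<in>{1..n}. k < r}"
proof -
  have "(\<lambda>i. rank n i y) ` {i\<in>{1..n}. rank n i y < r} = {k\<in>{1..n}. k < r}" (is "?L = ?R")
  proof
    show "?L \<subseteq> ?R"
    proof
      fix x assume "x \<in> ?L"
      then obtain i where i: "i \<in> {1..n}" "rank n i y < r" "x = rank n i y" by blast
      then show "x \<in> ?R" using rank_range[OF i(1), of y] by blast
    qed
    show "?R \<subseteq> ?L"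
    proof
      fix x assume x: "x \<in> ?R"
      then have "x \<in> (\<lambda>i. rank n i y) ` {1..n}" using rank_img[of n y] by simp
      then obtain i where "i \<in> {1..n}" "x = rank n i y" by blast
      moreover have "rank n i y < r" using x \<open>x = rank n i y\<close> by simp
      ultimately show "x \<in> ?L" by (intro rev_image_eqI[of i]) auto
    qed
  qed
  have "inj_on (\<lambda>i. rank n i y) {i\<in>{1..n}. rank n i y < r}"
    using rank_inj by (rule inj_on_subset) auto
  then have "card ((\<lambda>i. rank n i y) ` {i\<in>{1..n}. rank n i y < r}) = card {i\<in>{1..n}. rank n i y < r}"
    by (rule card_image)
  with \<open>?L = ?R\<close> show ?thesis by simp
qed


lemma pk_move:
  assumes "y' c \<le> y c" "y t \<le> y' t" "Pk y c t"
  shows "Pk y' c t"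
proof -
  from assms(3) consider "y c < y t" | "y c = y t" "c \<le> t" unfolding Pk_def by auto
  then show ?thesis
  proof cases
    case 1
    then have "y' c < y' t" using assms(1,2) by (meson order.strict_trans1 order.strict_trans2)
    then show ?thesis by (simp add: Pk_def)
  next
    case 2
    then have "y' c \<le> y' t" using assms(1,2) by (metis order_trans)
    then show ?thesis using 2 unfolding Pk_def by auto
  qed
qed

lemma key_count:
  assumes "\<forall>i\<in>{1..n}. z i \<in> {0, 1::nat}"
    and "\<forall>i\<in>{1..n}. z i = 1 \<longrightarrow> y i \<le> y' i"
    and "\<forall>i\<in>{1..n}. z i = 0 \<longrightarrow> y i \<ge> y' i"
  shows "card {i\<in>{1..n}. z i = 1 \<and> r \<le> rank n i y} \<le> card {i\<in>{1..n}. z i = 1 \<and> r \<le> rank n i y'}"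
proof -
  define T where "T = {i\<in>{1..n}. z i = 1}"
  define C where "C = {i\<in>{1..n}. z i \<noteq> 1}"
  define A where "A = {i\<in>{1..n}. rank n i y < r}"
  define A' where "A' = {i\<in>{1..n}. rank n i y' < r}"
  have fin: "finite T" "finite C" "finite A" "finite A'" unfolding T_def C_def A_def A'_def by auto
  have e1: "{i\<in>{1..n}. z i = 1 \<and> r \<le> rank n i y} = T - T \<inter> A" unfolding T_def A_def by auto
  have e2: "{i\<in>{1..n}. z i = 1 \<and> r \<le> rank n i y'} = T - T \<inter> A'" unfolding T_def A'_def by auto
  have cA1: "card A = card {k\<in>{1..n}. k<r}" unfolding A_def by (rule card_low)
  have cA2: "card A' = card {k\<in>{1..n}. k<r}" unfolding A'_def by (rule card_low)
  have cA: "card A = card A'" using cA1 cA2 by simp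
  have sA: "card A = card (T \<inter> A) + card (C \<inter> A)"
  proof -
    have "A = (T \<inter> A) \<union> (C \<inter> A)" unfolding T_def C_def A_def by auto
    moreover have "(T \<inter> A) \<inter> (C \<inter> A) = {}" unfolding T_def C_def by auto
    ultimately show ?thesis using fin card_Un_disjoint[of "T \<inter> A" "C \<inter> A"] by simp
  qed
  have sA': "card A' = card (T \<inter> A') + card (C \<inter> A')" 
  proof -
    have "A' = (T \<inter> A') \<union> (C \<inter> A')" unfolding T_def C_def A'_def by auto
    moreover have "(T \<inter> A') \<inter> (C \<inter> A') = {}" unfolding T_def C_def by auto
    ultimately show ?thesis using fin card_Un_disjoint[of "T \<inter> A'" "C \<inter> A'"] by simp
  qed
  have "card (T \<inter> A') \<le> card (T \<inter> A)"
  proof (rule ccontr)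
    assume H: "\<not> ?thesis"
    obtain t where t: "t \<in> T \<inter> A'" "t \<notin> A"
    proof -
      have "T \<inter> A' \<subseteq> T \<inter> A \<Longrightarrow> card (T \<inter> A') \<le> card (T \<inter> A)"
        by (rule card_mono) (use fin in auto)
      then have "\<not> T \<inter> A' \<subseteq> T \<inter> A" using H by blast
      then show ?thesis using that by blast
    qed
    have "card (C \<inter> A') < card (C \<inter> A)" using H cA sA sA' by linarith
    then obtain c where c: "c \<in> C \<inter> A" "c \<notin> A'"
    proof -
      have "C \<inter> A \<subseteq> C \<inter> A' \<Longrightarrow> card (C \<inter> A) \<le> card (C \<inter> A')"
        by (rule card_mono) (use fin in auto)
      then have "\<not> C \<inter> A \<subseteq> C \<inter> A'" using \<open>card (C \<inter> A') < card (C \<inter> A)\<close> by linarith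
      then show ?thesis using that by blast
    qed
    have tI: "t \<in> {1..n}" "z t = 1" using t unfolding T_def by auto
    have cI: "c \<in> {1..n}" "z c = 0" using c assms(1) unfolding C_def by auto
    have r1: "rank n c y < rank n t y" using c t tI cI unfolding A_def by auto
    have r2: "rank n t y' < rank n c y'" using c t tI cI unfolding A'_def by auto
    have "\<not> Pk y t c" using r1 rank_mono[of y t c n] by auto
    then have "Pk y c t" using Pk_total by blast
    moreover have "y' c \<le> y c" using assms(3) cI by auto
    moreover have "y t \<le> y' t" using assms(2) tI by auto
    ultimately have "Pk y' c t" using pk_move by blast
    then show False using r2 rank_mono[of y' c t n] by auto
  qed
  moreover have "card (T - T \<inter> A) = card T - card (T \<inter> A)"
    using fin by (intro card_Diff_subset) auto
  moreover have "card (T - T \<inter> A') = card T - card (T \<inter> A')"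
    using fin by (intro card_Diff_subset) auto
  ultimately show ?thesis unfolding e1 e2 by linarith
qed


lemma tele:
  fixes \<phi> :: "nat \<Rightarrow> real"
  shows "k \<le> n \<Longrightarrow> (\<Sum>r\<in>{1..n}. if r \<le> k then \<phi> r - \<phi> (r - 1) else 0) = \<phi> k - \<phi> 0"
proof -
  assume k: "k \<le> n"
  have "(\<Sum>r\<in>{1..n}. if r \<le> k then \<phi> r - \<phi> (r - 1) else 0) = (\<Sum>r\<in>{1..k}. \<phi> r - \<phi> (r - 1))"
  proof -
    have "{r\<in>{1..n}. r \<le> k} = {1..k}" using k by auto
    moreover have "(\<Sum>r\<in>{1..n}. if r \<le> k then \<phi> r - \<phi> (r - 1) else 0) = (\<Sum>r\<in>{r\<in>{1..n}. r \<le> k}. \<phi> r - \<phi> (r - 1))"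
      by (rule sum.inter_filter[symmetric]) simp
    ultimately show ?thesis by simp
  qed
  also have "\<dots> = \<phi> k - \<phi> 0"
    by (induction k) auto
  finally show ?thesis .
qed

lemma trank_part:
  fixes \<phi> :: "nat \<Rightarrow> real"
  assumes z01: "\<forall>i\<in>{1..n}. z i \<in> {0, 1::nat}"
  shows "t_rank \<phi> n z y = (\<Sum>i\<in>{1..n}. real (z i) * \<phi> 0)
     + (\<Sum>r\<in>{1..n}. (\<phi> r - \<phi> (r - 1)) * real (card {i\<in>{1..n}. z i = 1 \<and> r \<le> rank n i y}))"
proof -
  have step: "real (z i) * \<phi> (rank n i y) = real (z i) * \<phi> 0
      + (\<Sum>r\<in>{1..n}. (if z i = 1 \<and> r \<le> rank n i y then \<phi> r - \<phi> (r - 1) else 0))"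
    if i: "i \<in> {1..n}" for i
  proof -
    have rr: "rank n i y \<le> n" using rank_range[OF i, of y] by auto
    show ?thesis
    proof (cases "z i = 1")
      case True
      then show ?thesis using tele[OF rr, of \<phi>] by simp
    next
      case False
      then have "z i = 0" using z01 i by auto
      then show ?thesis by simp
    qed
  qed
  have sw: "(\<Sum>i\<in>{1..n}. \<Sum>r\<in>{1..n}. (if z i = 1 \<and> r \<le> rank n i y then \<phi> r - \<phi> (r - 1) else 0))
     = (\<Sum>r\<in>{1..n}. \<Sum>i\<in>{1..n}. (if z i = 1 \<and> r \<le> rank n i y then \<phi> r - \<phi> (r - 1) else 0))"
    by (rule sum.swap)
  have "t_rank \<phi> n z y = (\<Sum>i\<in>{1..n}. real (z i) * \<phi> 0
      + (\<Sum>r\<in>{1..n}. (if z i = 1 \<and> r \<le> rank n i y then \<phi> r - \<phi> (r - 1) else 0)))"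
    unfolding t_rank_def by (rule sum.cong) (auto simp: step)
  also have "\<dots> = (\<Sum>i\<in>{1..n}. real (z i) * \<phi> 0)
      + (\<Sum>r\<in>{1..n}. \<Sum>i\<in>{1..n}. (if z i = 1 \<and> r \<le> rank n i y then \<phi> r - \<phi> (r - 1) else 0))"
    by (simp only: sum.distrib sw)
  also have "(\<Sum>r\<in>{1..n}. \<Sum>i\<in>{1..n}. (if z i = 1 \<and> r \<le> rank n i y then \<phi> r - \<phi> (r - 1) else 0))
     = (\<Sum>r\<in>{1..n}. (\<phi> r - \<phi> (r - 1)) * real (card {i\<in>{1..n}. z i = 1 \<and> r \<le> rank n i y}))"
    by (rule sum.cong) (auto simp: sum.If_cases Int_def)
  finally show ?thesis .
qed

theorem lemma1:
  fixes \<phi> :: "nat \<Rightarrow> real" and n :: nat and z :: "nat \<Rightarrow> nat" and y y' :: "nat \<Rightarrow> ereal"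
  assumes "mono \<phi>" and "n \<ge> 1"
    and "\<forall>i\<in>{1..n}. z i \<in> {0, 1}"
    and "\<forall>i\<in>{1..n}. z i = 1 \<longrightarrow> y i \<le> y' i"
    and "\<forall>i\<in>{1..n}. z i = 0 \<longrightarrow> y i \<ge> y' i"
  shows "t_rank \<phi> n z y \<le> t_rank \<phi> n z y' \<and> t_mw \<phi> n z y \<le> t_mw \<phi> n z y'"
proof
  have D: "\<phi> r - \<phi> (r - 1) \<ge> 0" for r
    using \<open>mono \<phi>\<close> by (simp add: monoD)
  show "t_rank \<phi> n z y \<le> t_rank \<phi> n z y'"
    unfolding trank_part[OF assms(3), where \<phi>=\<phi> and y=y] trank_part[OF assms(3), where \<phi>=\<phi> and y=y']
    using key_count[OF assms(3,4,5)] D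
    by (intro add_left_mono sum_mono mult_left_mono) auto
  show "t_mw \<phi> n z y \<le> t_mw \<phi> n z y'"
    unfolding t_mw_def
  proof (rule sum_mono)
    fix i assume i: "i \<in> {1..n}"
    show "real (z i) * \<phi> (\<Sum>j = 1..n. (1 - z j) * psi i j (y i) (y j))
        \<le> real (z i) * \<phi> (\<Sum>j = 1..n. (1 - z j) * psi i j (y' i) (y' j))"
    proof (cases "z i = 1")
      case True
      have "(\<Sum>j = 1..n. (1 - z j) * psi i j (y i) (y j)) \<le> (\<Sum>j = 1..n. (1 - z j) * psi i j (y' i) (y' j))"
      proof (rule sum_mono)
        fix j assume j: "j \<in> {1..n}"
        show "(1 - z j) * psi i j (y i) (y j) \<le> (1 - z j) * psi i j (y' i) (y' j)"
        proof (cases "z j = 1")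
          case False
          then have "z j = 0" using assms(3) j by auto
          then have "Pk y j i \<Longrightarrow> Pk y' j i"
            using pk_move[of y' j y i] assms(4,5) i j True by auto
          then show ?thesis unfolding psi_eq[of i j y] psi_eq[of i j y'] by auto
        qed simp
      qed
      then show ?thesis using True \<open>mono \<phi>\<close> by (simp add: monoD)
    next
      case False
      then have "z i = 0" using assms(3) i by auto
      then show ?thesis by simp
    qed
  qed
qed

end
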